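(* Let $L$ be the Kirchhoff matrix and $\bar J$ the normalized matrix of maximum out-forests of a weighted digraph $\Gamma$. Then $\bar J$ is the eigenprojection of $L$, i.e., $\bar J$ is the idempotent matrix with range $N(L^{\nu})$ and kernel $R(L^{\nu})$, where $\nu$ is the index of $L$ (in fact $\nu=1$, so the range of $\bar J$ is $N(L)$ and its kernel is $R(L)$).
   Context: A weighted digraph $\Gamma$ has vertex set $\{1,\dots,n\}$, no loops, and each arc $j\to i$ ($j\ne i$) has a positive weight $a_{ij}$; $a_{ij}=0$ if there is no such arc. Its Kirchhoff matrix $L=[\ell_{ij}]$ has $\ell_{ij}=-a_{ij}$ for $j\ne i$ and $\ell_{ii}=\sum_{k\ne i}a_{ik}$. An out-forest of $\Gamma$ is a spanning subgraph whose weak components are diverging trees (rooted directed trees with paths from the root to all vertices); a maximum out-forest is one with the maximum number of arcs. The weight of a subgraph is the product of its arc weights. The normalized matrix of maximum out-forests $\bar J$ has $\bar J_{ij}$ equal to the total weight of the maximum out-forests of $\Gamma$ in which $i$ belongs to the tree rooted at $j$, divided by the total weight of all maximum out-forests. For a square matrix $A$, $R(A)$ and $N(A)$ denote range and kernel, and the index of $A$ is the least $k\ge0$ with $\operatorname{rank}A^{k+1}=\operatorname{rank}A^k$. *)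

theory Defs
  imports "HOL-Analysis.Analysis"
begin

text \<open>Vertices are the elements of a finite type 'n. A weighted digraph is given by
  a weight function a, where a i j > 0 is the weight of the arc j -> i, and a i j = 0
  means there is no such arc.\<close>

definition weighted_digraph :: "('n::finite \<Rightarrow> 'n \<Rightarrow> real) \<Rightarrow> bool" where
  "weighted_digraph a \<longleftrightarrow> (\<forall>i. a i i = 0) \<and> (\<forall>i j. a i j \<ge> 0)"

text \<open>Arcs as pairs (tail, head): (j,i) is the arc j -> i.\<close>
definition arcs :: "('n::finite \<Rightarrow> 'n \<Rightarrow> real) \<Rightarrow> ('n \<times> 'n) set" where
  "arcs a = {(j, i). j \<noteq> i \<and> a i j > 0}"

definition kirchhoff :: "('n::finite \<Rightarrow> 'n \<Rightarrow> real) \<Rightarrow> real^'n^'n" where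
  "kirchhoff a = (\<chi> i j. if i = j then (\<Sum>k\<in>UNIV - {i}. a i k) else - a i j)"

definition weak_comp :: "('n \<times> 'n) set \<Rightarrow> 'n \<Rightarrow> 'n set" where
  "weak_comp F v = {u. (v, u) \<in> (F \<union> F\<inverse>)\<^sup>*}"

text \<open>C (a vertex set) together with the arcs of F inside C is a diverging tree
  rooted at r: r reaches every vertex of C, and the underlying graph is a tree
  (connected with |C| - 1 edges; connectivity follows from reachability from r).\<close>
definition diverging_tree_on :: "('n \<times> 'n) set \<Rightarrow> 'n set \<Rightarrow> 'n \<Rightarrow> bool" where
  "diverging_tree_on F C r \<longleftrightarrow> r \<in> C \<and>
     (\<forall>v\<in>C. (r, v) \<in> (F \<inter> (C \<times> C))\<^sup>*) \<and>
     card (F \<inter> (C \<times> C)) = card C - 1"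

definition out_forest :: "('n::finite \<Rightarrow> 'n \<Rightarrow> real) \<Rightarrow> ('n \<times> 'n) set \<Rightarrow> bool" where
  "out_forest a F \<longleftrightarrow> F \<subseteq> arcs a \<and>
     (\<forall>v. \<exists>r. diverging_tree_on F (weak_comp F v) r)"

definition max_out_forest :: "('n::finite \<Rightarrow> 'n \<Rightarrow> real) \<Rightarrow> ('n \<times> 'n) set \<Rightarrow> bool" where
  "max_out_forest a F \<longleftrightarrow> out_forest a F \<and>
     (\<forall>G. out_forest a G \<longrightarrow> card G \<le> card F)"

definition sg_weight :: "('n::finite \<Rightarrow> 'n \<Rightarrow> real) \<Rightarrow> ('n \<times> 'n) set \<Rightarrow> real" where
  "sg_weight a F = (\<Prod>(j, i)\<in>F. a i j)"

definition in_tree_rooted_at :: "('n \<times> 'n) set \<Rightarrow> 'n \<Rightarrow> 'n \<Rightarrow> bool" where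
  "in_tree_rooted_at F i j \<longleftrightarrow> diverging_tree_on F (weak_comp F i) j"

definition norm_max_out_forest_matrix :: "('n::finite \<Rightarrow> 'n \<Rightarrow> real) \<Rightarrow> real^'n^'n" where
  "norm_max_out_forest_matrix a =
     (\<chi> i j. (\<Sum>F\<in>{F. max_out_forest a F \<and> in_tree_rooted_at F i j}. sg_weight a F)
            / (\<Sum>F\<in>{F. max_out_forest a F}. sg_weight a F))"

fun matpow :: "'a::semiring_1^'n^'n \<Rightarrow> nat \<Rightarrow> 'a^'n^'n" where
  "matpow A 0 = mat 1"
| "matpow A (Suc k) = A ** matpow A k"

definition mat_index :: "real^'n^'n \<Rightarrow> nat" where
  "mat_index A = (LEAST k. rank (matpow A (Suc k)) = rank (matpow A k))"

definition mat_range :: "real^'n^'m \<Rightarrow> (real^'m) set" where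
  "mat_range A = range (\<lambda>x. A *v x)"

definition mat_kernel :: "real^'n^'m \<Rightarrow> (real^'n) set" where
  "mat_kernel A = {x. A *v x = 0}"

definition is_eigenprojection :: "real^'n^'n \<Rightarrow> real^'n^'n \<Rightarrow> bool" where
  "is_eigenprojection P A \<longleftrightarrow> P ** P = P \<and>
     mat_range P = mat_kernel (matpow A (mat_index A)) \<and>
     mat_kernel P = mat_range (matpow A (mat_index A))"

end

theory Submission
  imports Defs
begin

definition indeg1 :: "('n \<times> 'n) set \<Rightarrow> bool" where
  "indeg1 F \<longleftrightarrow> (\<forall>p q u. (p,u)\<in>F \<longrightarrow> (q,u)\<in>F \<longrightarrow> p = q)"

definition isroot :: "('n \<times> 'n) set \<Rightarrow> 'n \<Rightarrow> bool" where
  "isroot F r \<longleftrightarrow> (\<forall>x. (x,r) \<notin> F)"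

definition forest :: "('n \<times> 'n) set \<Rightarrow> bool" where
  "forest F \<longleftrightarrow> indeg1 F \<and> acyclic F"

definition rt :: "('n \<times> 'n) set \<Rightarrow> 'n \<Rightarrow> 'n" where
  "rt F x = (THE r. (r,x) \<in> F\<^sup>* \<and> isroot F r)"

lemma anc_comparable:
  assumes "indeg1 F" "(r1,x) \<in> F\<^sup>*" "(r2,x) \<in> F\<^sup>*"
  shows "(r1,r2) \<in> F\<^sup>* \<or> (r2,r1) \<in> F\<^sup>*"
  using assms(2,3)
proof (induction arbitrary: r2 rule: rtrancl_induct)
  case base
  then show ?case by simp
next
  case (step w x)
  from step.prems show ?case
  proof (cases rule: rtranclE)
    case base
    then show ?thesis using step.hyps by (meson rtrancl.rtrancl_into_rtrancl)
  next
    case (step y)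
    then have "y = w" using assms(1) \<open>(w,x)\<in>F\<close> unfolding indeg1_def by blast
    then show ?thesis using step.IH step by blast
  qed
qed

lemma root_anc_eq:
  assumes "(r1,r2) \<in> F\<^sup>*" "isroot F r2" shows "r1 = r2"
  using assms by (metis isroot_def rtranclE)

lemma root_unique:
  assumes "indeg1 F" "(r1,x) \<in> F\<^sup>*" "(r2,x) \<in> F\<^sup>*" "isroot F r1" "isroot F r2"
  shows "r1 = r2"
  using anc_comparable[OF assms(1-3)] root_anc_eq assms(4,5) by metis

lemma root_exists:
  fixes F :: "('n::finite \<times> 'n) set"
  assumes "acyclic F"
  shows "\<exists>r. (r,x) \<in> F\<^sup>* \<and> isroot F r"
proof -
  have fin: "finite F" by (rule finite_subset[of _ UNIV]) auto
  have "wf F" using finite_acyclic_wf[OF fin assms] .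
  moreover have "x \<in> {r. (r,x) \<in> F\<^sup>*}" by simp
  ultimately obtain r where r: "r \<in> {r. (r,x) \<in> F\<^sup>*}" "\<And>y. (y,r) \<in> F \<Longrightarrow> y \<notin> {r. (r,x) \<in> F\<^sup>*}"
    using wf_eq_minimal[THEN iffD1, of F] by metis
  have "isroot F r" unfolding isroot_def
  proof (intro allI notI)
    fix y assume "(y,r) \<in> F"
    moreover then have "(y,x) \<in> F\<^sup>*" using r(1) by (simp add: converse_rtrancl_into_rtrancl)
    ultimately show False using r(2) by blast
  qed
  then show ?thesis using r(1) by blast
qed

lemma rt:
  fixes F :: "('n::finite \<times> 'n) set"
  assumes "forest F"
  shows "(rt F x, x) \<in> F\<^sup>*" "isroot F (rt F x)"
proof -
  have ind: "indeg1 F" and ac: "acyclic F" using assms forest_def by auto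
  obtain r where r: "(r,x) \<in> F\<^sup>*" "isroot F r" using root_exists[OF ac] by blast
  have "rt F x = r" unfolding rt_def
  proof (rule the_equality)
    show "(r,x) \<in> F\<^sup>* \<and> isroot F r" using r by simp
    fix r' assume "(r',x) \<in> F\<^sup>* \<and> isroot F r'"
    then show "r' = r" using root_unique[OF ind _ r(1) _ r(2)] by blast
  qed
  then show "(rt F x, x) \<in> F\<^sup>*" "isroot F (rt F x)" using r by auto
qed

lemma rt_eqI:
  fixes F :: "('n::finite \<times> 'n) set"
  assumes "forest F" "(r,x) \<in> F\<^sup>*" "isroot F r"
  shows "rt F x = r"
proof -
  have ind: "indeg1 F" using assms(1) forest_def by auto
  show ?thesis using root_unique[OF ind rt(1)[OF assms(1)] assms(2) rt(2)[OF assms(1)] assms(3)] .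
qed

lemma rt_root: "forest F \<Longrightarrow> isroot F i \<Longrightarrow> rt F i = (i::'n::finite)"
  by (simp add: rt_eqI)

lemma rt_desc:
  fixes F :: "('n::finite \<times> 'n) set"
  assumes "forest F" "(i,k) \<in> F\<^sup>*"
  shows "rt F k = rt F i"
proof -
  have "(rt F i, k) \<in> F\<^sup>*" using rt(1)[OF assms(1), of i] assms(2) by (rule rtrancl_trans)
  then show ?thesis using rt_eqI[OF assms(1) _ rt(2)[OF assms(1)]] by blast
qed

lemma wc_rt:
  fixes F :: "('n::finite \<times> 'n) set"
  assumes "forest F"
  shows "weak_comp F v = {u. rt F u = rt F v}"
proof
  show "weak_comp F v \<subseteq> {u. rt F u = rt F v}"
  proof
    fix u assume "u \<in> weak_comp F v"
    then have "(v,u) \<in> (F \<union> F\<inverse>)\<^sup>*" by (simp add: weak_comp_def)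
    then show "u \<in> {u. rt F u = rt F v}"
    proof (induction rule: rtrancl_induct)
      case base then show ?case by simp
    next
      case (step w u)
      then show ?case using rt_desc[OF assms] by (metis UnE converse_iff mem_Collect_eq r_into_rtrancl)
    qed
  qed
next
  show "{u. rt F u = rt F v} \<subseteq> weak_comp F v"
  proof
    fix u assume "u \<in> {u. rt F u = rt F v}"
    then have e: "rt F u = rt F v" by simp
    have 1: "(rt F v, u) \<in> (F \<union> F\<inverse>)\<^sup>*" using rt(1)[OF assms, of u] e
      by (metis in_rtrancl_UnI)
    have "(rt F v, v) \<in> F\<^sup>*" using rt(1)[OF assms] by blast
    then have "(v, rt F v) \<in> (F\<inverse>)\<^sup>*" by (simp add: rtrancl_converse)
    then have 2: "(v, rt F v) \<in> (F \<union> F\<inverse>)\<^sup>*" by (metis in_rtrancl_UnI)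
    show "u \<in> weak_comp F v" using 1 2 unfolding weak_comp_def by (meson mem_Collect_eq rtrancl_trans)
  qed
qed

lemma path_in_comp:
  fixes F :: "('n::finite \<times> 'n) set"
  assumes "forest F" "(r,u) \<in> F\<^sup>*"
  shows "(r,u) \<in> (F \<inter> {x. rt F x = rt F r} \<times> {x. rt F x = rt F r})\<^sup>*"
  using assms(2)
proof (induction rule: rtrancl_induct)
  case base then show ?case by simp
next
  case (step w u)
  have "rt F w = rt F r" using rt_desc[OF assms(1) step.hyps(1)] .
  moreover have "rt F u = rt F w" using rt_desc[OF assms(1)] step.hyps(2) by blast
  ultimately show ?case using step by (simp add: rtrancl.rtrancl_into_rtrancl)
qed

lemma forest_tree:
  fixes F :: "('n::finite \<times> 'n) set"
  assumes "forest F"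
  shows "diverging_tree_on F (weak_comp F v) (rt F v)"
proof -
  define r where "r = rt F v"
  define C where "C = weak_comp F v"
  have C: "C = {x. rt F x = r}" using wc_rt[OF assms] by (simp add: C_def r_def)
  have rr: "rt F r = r" using rt_root[OF assms] rt(2)[OF assms] r_def by blast
  have rC: "r \<in> C" using C rr by simp
  have reach: "\<forall>u\<in>C. (r,u) \<in> (F \<inter> C \<times> C)\<^sup>*"
  proof
    fix u assume "u \<in> C"
    then have "(r,u) \<in> F\<^sup>*" using C rt(1)[OF assms, of u] by simp
    then show "(r,u) \<in> (F \<inter> C \<times> C)\<^sup>*" using path_in_comp[OF assms] C rr by metis
  qed
  have "bij_betw snd (F \<inter> C \<times> C) (C - {r})"
    unfolding bij_betw_def
  proof
    show "inj_on snd (F \<inter> C \<times> C)" using assms unfolding forest_def indeg1_def inj_on_def by force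
    show "snd ` (F \<inter> C \<times> C) = C - {r}"
    proof
      show "snd ` (F \<inter> C \<times> C) \<subseteq> C - {r}"
        using rt(2)[OF assms, of v] unfolding r_def[symmetric] isroot_def by force
      show "C - {r} \<subseteq> snd ` (F \<inter> C \<times> C)"
      proof
        fix u assume u: "u \<in> C - {r}"
        then have "(r,u) \<in> (F \<inter> C \<times> C)\<^sup>*" using reach by blast
        moreover have "u \<noteq> r" using u by simp
        ultimately have "(r,u) \<in> (F \<inter> C \<times> C)\<^sup>+" by (simp add: rtrancl_eq_or_trancl)
        from tranclD2[OF this] obtain y where "(y,u) \<in> F \<inter> C \<times> C" by blast
        then show "u \<in> snd ` (F \<inter> C \<times> C)" using image_eqI[of u snd "(y,u)"] by simp
      qed
    qed
  qed
  then have "card (F \<inter> C \<times> C) = card C - 1"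
    using bij_betw_same_card rC by fastforce
  then show ?thesis unfolding diverging_tree_on_def using rC reach C_def r_def by blast
qed

lemma DT:
  fixes F :: "('n::finite \<times> 'n) set"
  assumes "diverging_tree_on F (weak_comp F v) r"
  shows "isroot F r" "(r,v) \<in> F\<^sup>*"
    "\<And>p q u. (p,u)\<in>F \<Longrightarrow> (q,u)\<in>F \<Longrightarrow> u \<in> weak_comp F v \<Longrightarrow> p = q"
proof -
  define C where "C = weak_comp F v"
  define FC where "FC = F \<inter> C \<times> C"
  have rC: "r \<in> C" and reach: "\<forall>u\<in>C. (r,u) \<in> FC\<^sup>*" and cd: "card FC = card C - 1"
    using assms unfolding diverging_tree_on_def C_def[symmetric] FC_def[symmetric] by blast+
  have vC: "v \<in> C" unfolding C_def weak_comp_def by simp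
  have into: "p \<in> C" if "(p,u) \<in> F" "u \<in> C" for p u
  proof -
    have "u \<in> weak_comp F v" using that(2) C_def by simp
    then have "(v,u) \<in> (F \<union> F\<inverse>)\<^sup>*" unfolding weak_comp_def by simp
    moreover have "(u,p) \<in> F \<union> F\<inverse>" using that by blast
    ultimately have "(v,p) \<in> (F \<union> F\<inverse>)\<^sup>*" by (rule rtrancl_into_rtrancl)
    then show ?thesis unfolding C_def weak_comp_def by simp
  qed
  have sub: "C - {r} \<subseteq> snd ` FC"
  proof
    fix u assume u: "u \<in> C - {r}"
    then have "(r,u) \<in> FC\<^sup>*" using reach by blast
    moreover have "u \<noteq> r" using u by simp
    ultimately have "(r,u) \<in> FC\<^sup>+" by (simp add: rtrancl_eq_or_trancl)
    from tranclD2[OF this] obtain y where "(r,y) \<in> FC\<^sup>*" "(y,u) \<in> FC" by blast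
    then show "u \<in> snd ` FC" using image_eqI[of u snd "(y,u)" FC] by simp
  qed
  have sub2: "snd ` FC \<subseteq> C" unfolding FC_def by auto
  have fin: "finite FC" "finite C" by (rule finite_subset[OF subset_UNIV], simp)+
  have le: "card (snd ` FC) \<le> card FC" by (rule card_image_le[OF fin(1)])
  have rnot: "r \<notin> snd ` FC"
  proof
    assume "r \<in> snd ` FC"
    then have "C \<subseteq> snd ` FC" using sub by blast
    then have "card C \<le> card (snd ` FC)" by (rule card_mono[rotated]) (simp add: fin)
    moreover have "card C > 0" using rC fin(2) by (simp add: card_gt_0_iff) blast
    ultimately show False using le cd by linarith
  qed
  have img: "snd ` FC = C - {r}" using sub sub2 rnot by blast
  have "card (snd ` FC) = card FC" using img cd rC by (simp add: card_Diff_singleton)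
  then have inj: "inj_on snd FC" using fin by (simp add: inj_on_iff_eq_card)
  show "isroot F r" unfolding isroot_def
  proof (intro allI notI)
    fix x assume "(x,r) \<in> F"
    then have "(x,r) \<in> FC" using into[OF \<open>(x,r)\<in>F\<close> rC] rC unfolding FC_def by blast
    then show False using rnot image_eqI[of r snd "(x,r)" FC] by simp
  qed
  have "FC\<^sup>* \<subseteq> F\<^sup>*" unfolding FC_def by (rule rtrancl_mono) blast
  then show "(r,v) \<in> F\<^sup>*" using reach vC by blast
  fix p q u assume "(p,u)\<in>F" "(q,u)\<in>F" "u \<in> weak_comp F v"
  then have uC: "u \<in> C" using C_def by simp
  have "(p,u) \<in> FC" using into[OF \<open>(p,u)\<in>F\<close> uC] uC \<open>(p,u)\<in>F\<close> unfolding FC_def by blast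
  moreover have "(q,u) \<in> FC" using into[OF \<open>(q,u)\<in>F\<close> uC] uC \<open>(q,u)\<in>F\<close> unfolding FC_def by blast
  ultimately have "(p,u) = (q,u)" using inj_onD[OF inj, of "(p,u)" "(q,u)"] by simp
  then show "p = q" by simp
qed

lemma no_cycle:
  assumes "indeg1 F" "isroot F r" "(r,u) \<in> F\<^sup>*"
  shows "(u,u) \<notin> F\<^sup>+"
  using assms(3)
proof (induction rule: rtrancl_induct)
  case base
  show ?case
  proof
    assume "(r,r) \<in> F\<^sup>+"
    from tranclD2[OF this] obtain y where "(y,r) \<in> F" by blast
    then show False using assms(2) unfolding isroot_def by blast
  qed
next
  case (step w u)
  show ?case
  proof
    assume "(u,u) \<in> F\<^sup>+"
    from tranclD2[OF this] obtain y where y: "(u,y) \<in> F\<^sup>*" "(y,u) \<in> F" by blast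
    then have "y = w" using assms(1) step.hyps(2) unfolding indeg1_def by blast
    then have "(w,w) \<in> F\<^sup>+" using y step.hyps(2) by (simp add: rtrancl_into_trancl2)
    then show False using step.IH by blast
  qed
qed

lemma out_forest_iff:
  fixes a :: "'n::finite \<Rightarrow> 'n \<Rightarrow> real"
  shows "out_forest a F \<longleftrightarrow> F \<subseteq> arcs a \<and> forest F"
proof
  assume H: "out_forest a F"
  have ind: "indeg1 F" unfolding indeg1_def
  proof (intro allI impI)
    fix p q u assume pq: "(p,u)\<in>F" "(q,u)\<in>F"
    obtain r where dt: "diverging_tree_on F (weak_comp F u) r" using H unfolding out_forest_def by blast
    have "u \<in> weak_comp F u" by (simp add: weak_comp_def)
    then show "p = q" using DT(3)[OF dt pq] by blast
  qed
  have "acyclic F" unfolding acyclic_def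
  proof
    fix u
    obtain r where dt: "diverging_tree_on F (weak_comp F u) r" using H unfolding out_forest_def by blast
    show "(u,u) \<notin> F\<^sup>+" by (rule no_cycle[OF ind DT(1)[OF dt] DT(2)[OF dt]])
  qed
  moreover have "F \<subseteq> arcs a" using H unfolding out_forest_def by blast
  ultimately show "F \<subseteq> arcs a \<and> forest F" using ind unfolding forest_def by blast
next
  assume H: "F \<subseteq> arcs a \<and> forest F"
  have "\<forall>v. \<exists>r. diverging_tree_on F (weak_comp F v) r"
  proof
    fix v show "\<exists>r. diverging_tree_on F (weak_comp F v) r" using forest_tree[of F v] H by blast
  qed
  then show "out_forest a F" unfolding out_forest_def using H by blast
qed

lemma in_tree_iff:
  fixes F :: "('n::finite \<times> 'n) set"
  assumes "forest F"
  shows "in_tree_rooted_at F i j \<longleftrightarrow> j = rt F i"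
proof
  assume "in_tree_rooted_at F i j"
  then have dt: "diverging_tree_on F (weak_comp F i) j" unfolding in_tree_rooted_at_def .
  show "j = rt F i" using rt_eqI[OF assms DT(2)[OF dt] DT(1)[OF dt]] by simp
next
  assume "j = rt F i"
  then show "in_tree_rooted_at F i j" unfolding in_tree_rooted_at_def using forest_tree[OF assms] by simp
qed

definition fo :: "('n::finite \<Rightarrow> 'n \<Rightarrow> real) \<Rightarrow> ('n \<times> 'n) set \<Rightarrow> bool" where
  "fo a F \<longleftrightarrow> F \<subseteq> arcs a \<and> forest F"

definition PP :: "('n::finite \<Rightarrow> 'n \<Rightarrow> real) \<Rightarrow> ('n \<times> 'n) set \<Rightarrow> 'n \<Rightarrow> 'n set" where
  "PP a G i = {p. a i p > 0 \<and> (i,p) \<notin> G\<^sup>*}"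

lemma forest_subset: "forest F \<Longrightarrow> G \<subseteq> F \<Longrightarrow> forest G"
  unfolding forest_def indeg1_def using acyclic_subset by blast

lemma insert_fo:
  fixes a :: "'n::finite \<Rightarrow> 'n \<Rightarrow> real"
  assumes "fo a G" "isroot G i" "p \<in> PP a G i"
  shows "fo a (insert (p,i) G)" "\<not> isroot (insert (p,i) G) i" "(p,i) \<notin> G"
    "card (insert (p,i) G) = Suc (card G)"
proof -
  have pi: "p \<noteq> i" using assms(3) PP_def by fastforce
  have arc: "(p,i) \<in> arcs a" using pi assms(3) unfolding PP_def arcs_def by auto
  show nG: "(p,i) \<notin> G" using assms(2) isroot_def by metis
  have ind: "indeg1 (insert (p,i) G)" using assms(1,2) unfolding fo_def forest_def indeg1_def isroot_def
    by blast
  have ac: "acyclic (insert (p,i) G)" unfolding acyclic_def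
  proof
    fix u show "(u,u) \<notin> (insert (p,i) G)\<^sup>+"
    proof
      assume "(u,u) \<in> (insert (p,i) G)\<^sup>+"
      then have "(u,u) \<in> G\<^sup>+ \<or> ((u,p) \<in> G\<^sup>* \<and> (i,u) \<in> G\<^sup>*)" by (simp add: trancl_insert)
      moreover have "(u,u) \<notin> G\<^sup>+" using assms(1) unfolding fo_def forest_def acyclic_def by blast
      ultimately have "(i,p) \<in> G\<^sup>*" by (meson rtrancl_trans)
      then show False using assms(3) PP_def by blast
    qed
  qed
  show "fo a (insert (p,i) G)" using assms(1) arc ind ac unfolding fo_def forest_def by blast
  show "\<not> isroot (insert (p,i) G) i" unfolding isroot_def by blast
  show "card (insert (p,i) G) = Suc (card G)" using nG by simp
qed

lemma decomp:
  fixes a :: "'n::finite \<Rightarrow> 'n \<Rightarrow> real" and f :: "('n \<times> 'n) set \<Rightarrow> real"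
  shows "(\<Sum>F\<in>{F. fo a F \<and> card F = m \<and> \<not> isroot F i}. f F)
       = (\<Sum>G\<in>{G. fo a G \<and> Suc (card G) = m \<and> isroot G i}. \<Sum>p\<in>PP a G i. f (insert (p,i) G))"
proof -
  define A where "A = {G. fo a G \<and> Suc (card G) = m \<and> isroot G i}"
  define S where "S = Sigma A (\<lambda>G. PP a G i)"
  define B where "B = {F. fo a F \<and> card F = m \<and> \<not> isroot F i}"
  define h where "h = (\<lambda>(G::('n \<times> 'n) set,p::'n). insert (p,i) G)"
  have "(\<Sum>G\<in>A. \<Sum>p\<in>PP a G i. f (insert (p,i) G)) = (\<Sum>(G,p)\<in>S. f (insert (p,i) G))"
    unfolding S_def by (rule sum.Sigma) auto
  also have "\<dots> = (\<Sum>x\<in>S. f (h x))" unfolding h_def by (simp add: case_prod_beta)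
  also have "\<dots> = (\<Sum>F\<in>B. f F)"
  proof (rule sum.reindex_bij_betw)
    show "bij_betw h S B" unfolding bij_betw_def
    proof
      show "inj_on h S"
      proof (rule inj_onI)
        fix x y assume x: "x \<in> S" and y: "y \<in> S" and e: "h x = h y"
        obtain G p where xx: "x = (G,p)" by (cases x)
        obtain G' p' where yy: "y = (G',p')" by (cases y)
        have r: "isroot G i" "isroot G' i" using x y unfolding xx yy S_def A_def by auto
        have "G = insert (p,i) G - {e. snd e = i}" using r(1) unfolding isroot_def by auto
        also have "\<dots> = insert (p',i) G' - {e. snd e = i}" using e unfolding xx yy h_def by simp
        also have "\<dots> = G'" using r(2) unfolding isroot_def by auto
        finally have GG: "G = G'" .
        have "(p',i) \<in> insert (p,i) G" using e unfolding xx yy h_def by auto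
        then have "p = p'" using r(1) unfolding isroot_def by auto
        then show "x = y" using xx yy GG by simp
      qed
      show "h ` S = B"
      proof
        show "h ` S \<subseteq> B"
        proof
          fix F assume "F \<in> h ` S"
          then obtain G p where "G \<in> A" "p \<in> PP a G i" "F = insert (p,i) G"
            unfolding S_def h_def by auto
          then show "F \<in> B" using insert_fo[of a G i p] unfolding A_def B_def by auto
        qed
        show "B \<subseteq> h ` S"
        proof
          fix F assume F: "F \<in> B"
          then obtain p where pF: "(p,i) \<in> F" unfolding B_def isroot_def by blast
          define G where "G = F - {(p,i)}"
          have fF: "forest F" "F \<subseteq> arcs a" using F unfolding B_def fo_def by auto
          have foG: "fo a G" using fF forest_subset unfolding fo_def G_def by blast
          have cF: "card F = m" using F unfolding B_def by simp
          have "Suc (card (F - {(p,i)})) = card F" by (rule card_Suc_Diff1[OF _ pF]) simp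
          then have cG: "Suc (card G) = m" using cF unfolding G_def by simp
          have rG: "isroot G i" using fF(1) pF unfolding isroot_def G_def forest_def indeg1_def by blast
          have api: "a i p > 0" using fF(2) pF unfolding arcs_def by blast
          have "(i,p) \<notin> G\<^sup>*"
          proof
            assume "(i,p) \<in> G\<^sup>*"
            moreover have "G\<^sup>* \<subseteq> F\<^sup>*" unfolding G_def by (rule rtrancl_mono) blast
            ultimately have "(i,p) \<in> F\<^sup>*" by blast
            then have "(i,i) \<in> F\<^sup>+" using pF by (rule rtrancl_into_trancl1)
            then show False using fF(1) unfolding forest_def acyclic_def by blast
          qed
          then have pP: "p \<in> PP a G i" using api unfolding PP_def by blast
          have FF: "F = insert (p,i) G" using pF unfolding G_def by blast
          have GA: "G \<in> A" unfolding A_def using foG cG rG by blast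
          have "(G,p) \<in> S" unfolding S_def using GA pP by blast
          moreover have "F = h (G,p)" unfolding h_def using FF by simp
          ultimately show "F \<in> h ` S" by (rule rev_image_eqI)
        qed
      qed
    qed
  qed
  finally show ?thesis unfolding A_def B_def by simp
qed

lemma rt_insert:
  fixes a :: "'n::finite \<Rightarrow> 'n \<Rightarrow> real"
  assumes "fo a G" "isroot G i" "p \<in> PP a G i"
  shows "\<And>k. (i,k) \<notin> G\<^sup>* \<Longrightarrow> rt (insert (p,i) G) k = rt G k"
    "rt (insert (p,i) G) i = rt G p"
proof -
  define F where "F = insert (p,i) G"
  have fF: "forest F" using insert_fo(1)[OF assms] unfolding fo_def F_def by blast
  have fG: "forest G" using assms(1) unfolding fo_def by blast
  have sub: "G\<^sup>* \<subseteq> F\<^sup>*" unfolding F_def by (rule rtrancl_mono) blast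
  have ipp: "(i,p) \<notin> G\<^sup>*" using assms(3) unfolding PP_def by blast
  have rootF: "isroot F x" if "isroot G x" "x \<noteq> i" for x
    using that unfolding F_def isroot_def by blast
  show "rt F k = rt G k" if "(i,k) \<notin> G\<^sup>*" for k
  proof -
    have "rt G k \<noteq> i"
    proof
      assume "rt G k = i"
      then show False using that rt(1)[OF fG, of k] by simp
    qed
    then have "isroot F (rt G k)" using rootF rt(2)[OF fG] by blast
    moreover have "(rt G k, k) \<in> F\<^sup>*" using rt(1)[OF fG, of k] sub by blast
    ultimately show ?thesis using rt_eqI[OF fF] by blast
  qed
  show "rt F i = rt G p"
  proof -
    have "rt G p \<noteq> i"
    proof
      assume "rt G p = i"
      then show False using ipp rt(1)[OF fG, of p] by simp
    qed
    then have "isroot F (rt G p)" using rootF rt(2)[OF fG] by blast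
    moreover have "(rt G p, p) \<in> F\<^sup>*" using rt(1)[OF fG, of p] sub by blast
    then have "(rt G p, i) \<in> F\<^sup>*" unfolding F_def
      by (rule rtrancl_into_rtrancl) simp
    ultimately show ?thesis using rt_eqI[OF fF] by blast
  qed
qed

definition Qf :: "('n::finite \<Rightarrow> 'n \<Rightarrow> real) \<Rightarrow> nat \<Rightarrow> 'n \<Rightarrow> 'n \<Rightarrow> real" where
  "Qf a m i j = (\<Sum>F\<in>{F. fo a F \<and> card F = m}. sg_weight a F * (if rt F i = j then 1 else 0))"

definition sig :: "('n::finite \<Rightarrow> 'n \<Rightarrow> real) \<Rightarrow> nat \<Rightarrow> real" where
  "sig a m = (\<Sum>F\<in>{F. fo a F \<and> card F = m}. sg_weight a F)"

lemma split_root: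
  fixes a :: "'n::finite \<Rightarrow> 'n \<Rightarrow> real" and g :: "('n \<times> 'n) set \<Rightarrow> real"
  shows "(\<Sum>F\<in>{F. fo a F \<and> card F = m}. g F) =
     (\<Sum>F\<in>{F. fo a F \<and> card F = m \<and> isroot F i}. g F) + (\<Sum>F\<in>{F. fo a F \<and> card F = m \<and> \<not> isroot F i}. g F)"
proof -
  have "{F. fo a F \<and> card F = m} = {F. fo a F \<and> card F = m \<and> isroot F i} \<union> {F. fo a F \<and> card F = m \<and> \<not> isroot F i}"
    by blast
  then show ?thesis by (simp add: sum.union_disjoint disjoint_iff)
qed

lemma weight_insert:
  fixes a :: "'n::finite \<Rightarrow> 'n \<Rightarrow> real"
  assumes "(p,i) \<notin> G"
  shows "sg_weight a (insert (p,i) G) = a i p * sg_weight a G"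
  using assms unfolding sg_weight_def by (simp add: prod.insert)

lemma sym_cancel:
  fixes c :: "'n \<Rightarrow> real" and h :: "'n \<Rightarrow> real"
  shows "(\<Sum>p\<in>P. \<Sum>k\<in>P. c p * c k * (h p - h k)) = 0"
proof -
  have "(\<Sum>p\<in>P. \<Sum>k\<in>P. c p * c k * (h p - h k)) =
        (\<Sum>p\<in>P. \<Sum>k\<in>P. c p * c k * h p) - (\<Sum>p\<in>P. \<Sum>k\<in>P. c p * c k * h k)"
    by (simp add: sum_subtractf right_diff_distrib)
  also have "(\<Sum>p\<in>P. \<Sum>k\<in>P. c p * c k * h k) = (\<Sum>k\<in>P. \<Sum>p\<in>P. c p * c k * h k)"
    by (rule sum.swap)
  also have "\<dots> = (\<Sum>p\<in>P. \<Sum>k\<in>P. c p * c k * h p)"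
    by (simp add: mult.commute)
  finally show ?thesis by simp
qed

lemma main_identity:
  fixes a :: "'n::finite \<Rightarrow> 'n \<Rightarrow> real"
  assumes wd: "weighted_digraph a"
  shows "(\<Sum>k\<in>UNIV. a i k * (Qf a m i j - Qf a m k j)) + Qf a (Suc m) i j
         = (if i = j then sig a (Suc m) else 0)"
proof -
  define W where "W = sg_weight a"
  define ind where "ind = (\<lambda>F x. if rt F x = j then 1 else (0::real))"
  define \<delta> where "\<delta> = (if i = j then 1 else (0::real))"
  define inner where "inner = (\<lambda>F. \<Sum>k\<in>UNIV. a i k * (W F * (ind F i - ind F k)))"
  define Rm where "Rm = {G. fo a G \<and> card G = m \<and> isroot G i}"
  define Rm1 where "Rm1 = {G. fo a G \<and> card G = Suc m \<and> isroot G i}"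
  have zero_out: "a i k * (W F * (ind F i - ind F k)) = 0" if "fo a F" "k \<notin> PP a F i" for F k
  proof (cases "a i k > 0")
    case True
    then have "(i,k) \<in> F\<^sup>*" using that(2) unfolding PP_def by auto
    moreover have "forest F" using that(1) unfolding fo_def by blast
    ultimately have "rt F k = rt F i" using rt_desc by blast
    then show ?thesis by (simp add: ind_def)
  next
    case False
    moreover have "a i k \<ge> 0" using wd unfolding weighted_digraph_def by blast
    ultimately have "a i k = 0" by linarith
    then show ?thesis by simp
  qed
  have s1: "(\<Sum>k\<in>UNIV. a i k * (Qf a m i j - Qf a m k j)) = (\<Sum>F\<in>{F. fo a F \<and> card F = m}. inner F)"
  proof -
    have "Qf a m i j - Qf a m k j = (\<Sum>F\<in>{F. fo a F \<and> card F = m}. W F * (ind F i - ind F k))" for k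
      unfolding Qf_def W_def ind_def by (simp add: sum_subtractf right_diff_distrib)
    then have "(\<Sum>k\<in>UNIV. a i k * (Qf a m i j - Qf a m k j)) =
       (\<Sum>k\<in>UNIV. \<Sum>F\<in>{F. fo a F \<and> card F = m}. a i k * (W F * (ind F i - ind F k)))"
      by (simp add: sum_distrib_left)
    also have "\<dots> = (\<Sum>F\<in>{F. fo a F \<and> card F = m}. inner F)" unfolding inner_def by (rule sum.swap)
    finally show ?thesis .
  qed
  have inner_root: "inner F = (\<Sum>k\<in>PP a F i. a i k * W F * (\<delta> - ind F k))" if "F \<in> Rm" for F
  proof -
    have fo: "fo a F" and r: "isroot F i" using that unfolding Rm_def by auto
    have "forest F" using fo unfolding fo_def by blast
    then have "rt F i = i" using rt_root r by blast
    then have ri: "ind F i = \<delta>" unfolding ind_def \<delta>_def by simp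
    show ?thesis unfolding inner_def
      by (rule sum.mono_neutral_cong_right) (use zero_out[OF fo] ri in auto)
  qed
  have inner_nonroot: "(\<Sum>p\<in>PP a G i. inner (insert (p,i) G)) = 0" if "fo a G" "isroot G i" for G
  proof -
    have "inner (insert (p,i) G) = (\<Sum>k\<in>PP a G i. a i p * a i k * W G * (ind G p - ind G k))"
      if p: "p \<in> PP a G i" for p
    proof -
      have foF: "fo a (insert (p,i) G)" and nG: "(p,i) \<notin> G" using insert_fo[OF \<open>fo a G\<close> \<open>isroot G i\<close> p] by auto
      have wF: "W (insert (p,i) G) = a i p * W G" using weight_insert[OF nG] unfolding W_def by simp
      have ri: "ind (insert (p,i) G) i = ind G p" unfolding ind_def using rt_insert(2)[OF \<open>fo a G\<close> \<open>isroot G i\<close> p] by simp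
      have rk: "ind (insert (p,i) G) k = ind G k" if "k \<in> PP a G i" for k
      proof -
        have "(i,k) \<notin> G\<^sup>*" using that unfolding PP_def by blast
        then show ?thesis unfolding ind_def using rt_insert(1)[OF \<open>fo a G\<close> \<open>isroot G i\<close> p] by simp
      qed
      have zo: "a i k * (W (insert (p,i) G) * (ind (insert (p,i) G) i - ind (insert (p,i) G) k)) = 0"
        if "k \<notin> PP a G i" for k
      proof (cases "a i k > 0")
        case True
        then have "(i,k) \<in> G\<^sup>*" using that unfolding PP_def by auto
        moreover have "G\<^sup>* \<subseteq> (insert (p,i) G)\<^sup>*" by (rule rtrancl_mono) blast
        ultimately have "(i,k) \<in> (insert (p,i) G)\<^sup>*" by blast
        moreover have "forest (insert (p,i) G)" using foF unfolding fo_def by blast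
        ultimately have "rt (insert (p,i) G) k = rt (insert (p,i) G) i" using rt_desc by blast
        then show ?thesis by (simp add: ind_def)
      next
        case False
        moreover have "a i k \<ge> 0" using wd unfolding weighted_digraph_def by blast
    ultimately have "a i k = 0" by linarith
        then show ?thesis by simp
      qed
      show ?thesis unfolding inner_def
        by (rule sum.mono_neutral_cong_right) (use zo wF ri rk in auto)
    qed
    then have "(\<Sum>p\<in>PP a G i. inner (insert (p,i) G)) =
        (\<Sum>p\<in>PP a G i. \<Sum>k\<in>PP a G i. a i p * a i k * (W G * ind G p - W G * ind G k))"
      by (simp add: algebra_simps)
    also have "\<dots> = 0" using sym_cancel[of "a i" "\<lambda>x. W G * ind G x" "PP a G i"] by simp
    finally show ?thesis .
  qed
  have s2: "(\<Sum>F\<in>{F. fo a F \<and> card F = m}. inner F) =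
      (\<Sum>G\<in>Rm. \<Sum>k\<in>PP a G i. a i k * W G * (\<delta> - ind G k))"
  proof -
    have "(\<Sum>F\<in>{F. fo a F \<and> card F = m \<and> \<not> isroot F i}. inner F) =
      (\<Sum>G\<in>{G. fo a G \<and> Suc (card G) = m \<and> isroot G i}. \<Sum>p\<in>PP a G i. inner (insert (p,i) G))"
      by (rule decomp)
    also have "\<dots> = 0" using inner_nonroot by (intro sum.neutral) auto
    finally have "(\<Sum>F\<in>{F. fo a F \<and> card F = m \<and> \<not> isroot F i}. inner F) = 0" .
    moreover have "(\<Sum>F\<in>Rm. inner F) = (\<Sum>G\<in>Rm. \<Sum>k\<in>PP a G i. a i k * W G * (\<delta> - ind G k))"
      using inner_root by (rule sum.cong[OF refl])
    ultimately show ?thesis using split_root[where a=a and m=m and g=inner and i=i] Rm_def by simp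
  qed
  have decompS: "(\<Sum>F\<in>{F. fo a F \<and> card F = Suc m \<and> \<not> isroot F i}. g F) =
      (\<Sum>G\<in>Rm. \<Sum>p\<in>PP a G i. g (insert (p,i) G))" for g :: "('n \<times> 'n) set \<Rightarrow> real"
  proof -
    have "{G. fo a G \<and> Suc (card G) = Suc m \<and> isroot G i} = Rm" unfolding Rm_def by simp
    then show ?thesis using decomp[where a=a and m="Suc m" and i=i and f=g] by simp
  qed
  have winsert: "W (insert (p,i) G) = a i p * W G" if "G \<in> Rm" "p \<in> PP a G i" for G p
  proof -
    have "fo a G" "isroot G i" using that(1) unfolding Rm_def by auto
    then have "(p,i) \<notin> G" using insert_fo(3) that(2) by blast
    then show ?thesis unfolding W_def by (rule weight_insert)
  qed
  have insind: "ind (insert (p,i) G) i = ind G p" if "G \<in> Rm" "p \<in> PP a G i" for G p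
  proof -
    have "fo a G" "isroot G i" using that(1) unfolding Rm_def by auto
    then show ?thesis unfolding ind_def using rt_insert(2) that(2) by metis
  qed
  have rootind: "ind F i = \<delta>" if "F \<in> Rm1" for F
  proof -
    have "fo a F" "isroot F i" using that unfolding Rm1_def by auto
    then have "rt F i = i" using rt_root unfolding fo_def by blast
    then show ?thesis unfolding ind_def \<delta>_def by simp
  qed
  have s3: "Qf a (Suc m) i j = (\<Sum>F\<in>Rm1. W F * \<delta>) + (\<Sum>G\<in>Rm. \<Sum>p\<in>PP a G i. a i p * W G * ind G p)"
  proof -
    have "Qf a (Suc m) i j = (\<Sum>F\<in>Rm1. W F * ind F i) +
        (\<Sum>F\<in>{F. fo a F \<and> card F = Suc m \<and> \<not> isroot F i}. W F * ind F i)"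
      unfolding Qf_def W_def ind_def Rm1_def by (rule split_root)
    also have "(\<Sum>F\<in>Rm1. W F * ind F i) = (\<Sum>F\<in>Rm1. W F * \<delta>)"
      by (rule sum.cong[OF refl]) (simp add: rootind)
    also have "(\<Sum>F\<in>{F. fo a F \<and> card F = Suc m \<and> \<not> isroot F i}. W F * ind F i) =
       (\<Sum>G\<in>Rm. \<Sum>p\<in>PP a G i. W (insert (p,i) G) * ind (insert (p,i) G) i)" by (rule decompS)
    also have "\<dots> = (\<Sum>G\<in>Rm. \<Sum>p\<in>PP a G i. a i p * W G * ind G p)"
      by (rule sum.cong[OF refl], rule sum.cong[OF refl])
         (simp add: winsert insind)
    finally show ?thesis .
  qed
  have s4: "sig a (Suc m) = (\<Sum>F\<in>Rm1. W F) + (\<Sum>G\<in>Rm. \<Sum>p\<in>PP a G i. a i p * W G)"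
  proof -
    have "sig a (Suc m) = (\<Sum>F\<in>Rm1. W F) +
        (\<Sum>F\<in>{F. fo a F \<and> card F = Suc m \<and> \<not> isroot F i}. W F)"
      unfolding sig_def W_def Rm1_def by (rule split_root)
    also have "(\<Sum>F\<in>{F. fo a F \<and> card F = Suc m \<and> \<not> isroot F i}. W F) =
       (\<Sum>G\<in>Rm. \<Sum>p\<in>PP a G i. W (insert (p,i) G))" by (rule decompS)
    also have "\<dots> = (\<Sum>G\<in>Rm. \<Sum>p\<in>PP a G i. a i p * W G)"
      by (rule sum.cong[OF refl], rule sum.cong[OF refl]) (simp add: winsert)
    finally show ?thesis .
  qed
  have "(\<Sum>k\<in>UNIV. a i k * (Qf a m i j - Qf a m k j)) + Qf a (Suc m) i j
     = (\<Sum>G\<in>Rm. \<Sum>k\<in>PP a G i. a i k * W G * (\<delta> - ind G k)) + (\<Sum>G\<in>Rm. \<Sum>p\<in>PP a G i. a i p * W G * ind G p)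
       + (\<Sum>F\<in>Rm1. W F * \<delta>)"
    using s1 s2 s3 by simp
  also have "(\<Sum>G\<in>Rm. \<Sum>k\<in>PP a G i. a i k * W G * (\<delta> - ind G k)) + (\<Sum>G\<in>Rm. \<Sum>p\<in>PP a G i. a i p * W G * ind G p)
      = (\<Sum>G\<in>Rm. \<Sum>k\<in>PP a G i. a i k * W G * \<delta>)"
    by (simp add: sum.distrib[symmetric] algebra_simps)
  also have "(\<Sum>G\<in>Rm. \<Sum>k\<in>PP a G i. a i k * W G * \<delta>) + (\<Sum>F\<in>Rm1. W F * \<delta>) = \<delta> * sig a (Suc m)"
    using s4 by (simp add: sum_distrib_left sum_distrib_right algebra_simps)
  finally show ?thesis unfolding \<delta>_def by simp
qed

lemma kirch_mult:
  fixes a :: "'n::finite \<Rightarrow> 'n \<Rightarrow> real"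
  assumes "weighted_digraph a"
  shows "(kirchhoff a ** X) $ i $ j = (\<Sum>k\<in>UNIV. a i k * (X$i$j - X$k$j))"
proof -
  have aii: "a i i = 0" using assms unfolding weighted_digraph_def by blast
  have "(kirchhoff a ** X) $ i $ j = (\<Sum>k\<in>UNIV. kirchhoff a $ i $ k * X$k$j)"
    by (simp add: matrix_matrix_mult_def)
  also have "\<dots> = kirchhoff a $ i $ i * X$i$j + (\<Sum>k\<in>UNIV-{i}. kirchhoff a $ i $ k * X$k$j)"
    by (simp add: sum.remove)
  also have "\<dots> = (\<Sum>k\<in>UNIV-{i}. a i k) * X$i$j + (\<Sum>k\<in>UNIV-{i}. - a i k * X$k$j)"
    unfolding kirchhoff_def by simp
  also have "\<dots> = (\<Sum>k\<in>UNIV-{i}. a i k * (X$i$j - X$k$j))"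
    by (simp add: sum_distrib_right sum_subtractf[symmetric] right_diff_distrib sum_negf)
  also have "\<dots> = a i i * (X$i$j - X$i$j) + (\<Sum>k\<in>UNIV-{i}. a i k * (X$i$j - X$k$j))" by simp
  also have "\<dots> = (\<Sum>k\<in>UNIV. a i k * (X$i$j - X$k$j))"
    using sum.remove[of UNIV i "\<lambda>k. a i k * (X$i$j - X$k$j)"] by simp
  finally show ?thesis .
qed

lemma kirch_vec:
  fixes a :: "'n::finite \<Rightarrow> 'n \<Rightarrow> real"
  assumes "weighted_digraph a"
  shows "(kirchhoff a *v x) $ i = (\<Sum>k\<in>UNIV. a i k * (x$i - x$k))"
proof -
  have "(kirchhoff a *v x) $ i = (\<Sum>k\<in>UNIV. kirchhoff a $ i $ k * x$k)"
    by (simp add: matrix_vector_mult_def)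
  also have "\<dots> = kirchhoff a $ i $ i * x$i + (\<Sum>k\<in>UNIV-{i}. kirchhoff a $ i $ k * x$k)"
    by (simp add: sum.remove)
  also have "\<dots> = (\<Sum>k\<in>UNIV-{i}. a i k) * x$i + (\<Sum>k\<in>UNIV-{i}. - a i k * x$k)"
    unfolding kirchhoff_def by simp
  also have "\<dots> = (\<Sum>k\<in>UNIV-{i}. a i k * (x$i - x$k))"
    by (simp add: sum_distrib_right sum_subtractf[symmetric] right_diff_distrib sum_negf)
  also have "\<dots> = a i i * (x$i - x$i) + (\<Sum>k\<in>UNIV-{i}. a i k * (x$i - x$k))" by simp
  also have "\<dots> = (\<Sum>k\<in>UNIV. a i k * (x$i - x$k))"
    using sum.remove[of UNIV i "\<lambda>k. a i k * (x$i - x$k)"] by simp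
  finally show ?thesis .
qed

lemma maxp:
  fixes a :: "'n::finite \<Rightarrow> 'n \<Rightarrow> real"
  assumes wd: "weighted_digraph a" and Lz: "kirchhoff a *v z = 0" and zy: "z = kirchhoff a *v y"
  shows "z $ i \<le> 0"
proof -
  have apos: "a u v \<ge> 0" for u v using wd unfolding weighted_digraph_def by blast
  define \<mu> where "\<mu> = Max (range (\<lambda>i. z$i))"
  have zle: "z$i \<le> \<mu>" for i unfolding \<mu>_def by (rule Max_ge) auto
  have "\<mu> \<in> range (\<lambda>i. z$i)" unfolding \<mu>_def by (rule Max_in) auto
  then obtain i0 where i0: "z$i0 = \<mu>" by auto
  define M where "M = {i. z$i = \<mu>}"
  have closed: "k \<in> M" if "i \<in> M" "a i k > 0" for i k
  proof -
    have s: "(\<Sum>k\<in>UNIV. a i k * (z$i - z$k)) = 0" using kirch_vec[OF wd, of z i] Lz by simp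
    have nn: "\<And>k. k \<in> UNIV \<Longrightarrow> 0 \<le> a i k * (z$i - z$k)"
      using that(1) zle apos unfolding M_def by (simp add: mult_nonneg_nonneg)
    have fin: "finite (UNIV::'n set)" by simp
    have "\<forall>k\<in>UNIV. a i k * (z$i - z$k) = 0"
      using iffD1[OF sum_nonneg_eq_0_iff[OF fin nn] s] .
    then have "a i k * (z$i - z$k) = 0" by blast
    then have "z$k = z$i" using that(2) by simp
    then show ?thesis using that(1) unfolding M_def by simp
  qed
  have Mne: "M \<noteq> {}" using i0 M_def by blast
  define ym where "ym = Min ((\<lambda>i. y$i) ` M)"
  have "ym \<in> (\<lambda>i. y$i) ` M" unfolding ym_def by (rule Min_in) (use Mne in auto)
  then obtain i1 where i1: "i1 \<in> M" "y$i1 = ym" by auto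
  have ymin: "ym \<le> y$k" if "k \<in> M" for k unfolding ym_def by (rule Min_le) (use that in auto)
  have "z$i1 = (\<Sum>k\<in>UNIV. a i1 k * (y$i1 - y$k))" using kirch_vec[OF wd, of y i1] zy by simp
  also have "\<dots> \<le> 0"
  proof (rule sum_nonpos)
    fix k assume "k \<in> (UNIV::'n set)"
    show "a i1 k * (y$i1 - y$k) \<le> 0"
    proof (cases "a i1 k > 0")
      case True
      then have "k \<in> M" using closed i1(1) by blast
      then have "y$i1 \<le> y$k" using ymin i1(2) by simp
      then show ?thesis using True by (simp add: mult_nonneg_nonpos)
    next
      case False
      then have "a i1 k = 0" using apos[of i1 k] by linarith
      then show ?thesis by simp
    qed
  qed
  finally have "\<mu> \<le> 0" using i1(1) unfolding M_def by simp
  then show ?thesis using zle[of i] by linarith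
qed

lemma NR:
  fixes a :: "'n::finite \<Rightarrow> 'n \<Rightarrow> real"
  assumes wd: "weighted_digraph a" and Lz: "kirchhoff a *v z = 0" and zy: "z = kirchhoff a *v y"
  shows "z = 0"
proof -
  have 1: "z$i \<le> 0" for i using maxp[OF wd Lz zy] .
  have "kirchhoff a *v (-z) = 0" using Lz by (simp add: matrix_vector_mult_diff_distrib[of _ 0 z, simplified])
  moreover have "-z = kirchhoff a *v (-y)" using zy by (simp add: matrix_vector_mult_diff_distrib[of _ 0 y, simplified])
  ultimately have 2: "(-z)$i \<le> 0" for i using maxp[OF wd] by blast
  show ?thesis using 1 2 by (simp add: vec_eq_iff) (meson antisym neg_le_0_iff_le)
qed

lemma abstract:
  fixes L J X :: "real^'n^'n"
  assumes NR: "\<And>z y. L *v z = 0 \<Longrightarrow> z = L *v y \<Longrightarrow> z = 0"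
    and LJ: "L ** J = 0" and IJ: "mat 1 - J = L ** X"
    and nz: "v \<noteq> 0" "L *v v = 0"
  shows "is_eigenprojection J L \<and> mat_index L = 1 \<and> mat_range J = mat_kernel L \<and> mat_kernel J = mat_range L"
proof -
  have dec: "x - J *v x = L *v (X *v x)" for x
  proof -
    have "x - J *v x = (mat 1 - J) *v x" by (simp add: matrix_vector_mult_diff_rdistrib)
    also have "\<dots> = L *v (X *v x)" using IJ by (simp add: matrix_vector_mul_assoc)
    finally show ?thesis .
  qed
  have LJx: "L *v (J *v x) = 0" for x using LJ by (simp add: matrix_vector_mul_assoc)
  have fixJ: "J *v w = w" if "L *v w = 0" for w
  proof -
    have "L *v (w - J *v w) = 0" using that LJx by (simp add: matrix_vector_mult_diff_distrib)
    then have "w - J *v w = 0" using NR dec by blast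
    then show ?thesis by simp
  qed
  have JJ: "J ** J = J"
    unfolding matrix_eq by (simp add: matrix_vector_mul_assoc[symmetric] fixJ LJx)
  have R1: "mat_range J = mat_kernel L"
  proof
    show "mat_range J \<subseteq> mat_kernel L" unfolding mat_range_def mat_kernel_def using LJx by auto
    show "mat_kernel L \<subseteq> mat_range J" unfolding mat_range_def mat_kernel_def
    proof
      fix w assume "w \<in> {x. L *v x = 0}"
      then have "w = J *v w" using fixJ by simp
      then show "w \<in> range ((*v) J)" by blast
    qed
  qed
  have R2: "mat_kernel J = mat_range L"
  proof
    show "mat_kernel J \<subseteq> mat_range L" unfolding mat_range_def mat_kernel_def
    proof
      fix x assume "x \<in> {x. J *v x = 0}"
      then have "x = L *v (X *v x)" using dec[of x] by simp
      then show "x \<in> range ((*v) L)" by blast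
    qed
    show "mat_range L \<subseteq> mat_kernel J" unfolding mat_range_def mat_kernel_def
    proof
      fix x assume "x \<in> range ((*v) L)"
      then obtain y where y: "x = L *v y" by blast
      have "J *v x = x - L *v (X *v x)" by (simp add: dec[of x, symmetric])
      also have "\<dots> = L *v (y - X *v x)" using y by (simp add: matrix_vector_mult_diff_distrib)
      finally have "J *v x = L *v (y - X *v x)" .
      then have "J *v x = 0" using NR LJx by blast
      then show "x \<in> {x. J *v x = 0}" by simp
    qed
  qed
  have m1: "matpow L 1 = L" by simp
  have m2: "matpow L 2 = L ** L" by (simp add: numeral_2_eq_2)
  have rL: "rank (matpow L 2) = rank (matpow L 1)"
  proof -
    have "range (\<lambda>x. (L ** L) *v x) = range (\<lambda>x. L *v x)"
    proof
      show "range (\<lambda>x. (L ** L) *v x) \<subseteq> range (\<lambda>x. L *v x)"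
        by (auto simp: matrix_vector_mul_assoc[symmetric])
      show "range (\<lambda>x. L *v x) \<subseteq> range (\<lambda>x. (L ** L) *v x)"
      proof
        fix z assume "z \<in> range (\<lambda>x. L *v x)"
        then obtain y where y: "z = L *v y" by blast
        have "L *v y = L *v (J *v y + (y - J *v y))" by simp
        also have "\<dots> = L *v (L *v (X *v y))" using LJx dec by (simp add: matrix_vector_right_distrib)
        also have "\<dots> = (L ** L) *v (X *v y)" by (rule matrix_vector_mul_assoc)
        finally show "z \<in> range (\<lambda>x. (L ** L) *v x)" using y by blast
      qed
    qed
    then show ?thesis using m1 m2 by (simp add: rank_dim_range)
  qed
  have r0: "rank (matpow L 1) \<noteq> rank (matpow L 0)"
  proof
    assume "rank (matpow L 1) = rank (matpow L 0)"
    then have "rank L = CARD('n)" using rank_I by simp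
    then have "surj ((*v) L)" using full_rank_surjective by blast
    then obtain y where "v = L *v y" by (metis surjD)
    then have "v = 0" using NR nz(2) by blast
    then show False using nz(1) by simp
  qed
  have idx: "mat_index L = 1" unfolding mat_index_def
  proof (rule Least_equality)
    show "rank (matpow L (Suc 1)) = rank (matpow L 1)" using rL by (simp add: numeral_2_eq_2)
    fix k assume "rank (matpow L (Suc k)) = rank (matpow L k)"
    then show "1 \<le> k" using r0 by (cases k) auto
  qed
  show ?thesis unfolding is_eigenprojection_def using idx JJ R1 R2 m1 by simp
qed

definition Mx :: "('n::finite \<Rightarrow> 'n \<Rightarrow> real) \<Rightarrow> nat" where
  "Mx a = Max (card ` {F. fo a F})"

lemma fo_empty: "fo a {}"
  unfolding fo_def forest_def indeg1_def acyclic_def by simp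

lemma fin_fo: "finite {F. fo (a::'n::finite \<Rightarrow> 'n \<Rightarrow> real) F}"
  by (rule finite_subset[OF subset_UNIV]) simp

lemma card_le_Mx: "fo a F \<Longrightarrow> card F \<le> Mx a"
  unfolding Mx_def by (rule Max_ge) (use fin_fo in auto)

lemma Mx_attained: obtains F where "fo a F" "card F = Mx a"
proof -
  have "Mx a \<in> card ` {F. fo a F}" unfolding Mx_def
    by (rule Max_in) (use fin_fo fo_empty in auto)
  then obtain F where "fo a F" "Mx a = card F" by auto
  then show ?thesis using that by simp
qed

lemma max_iff: "max_out_forest a F \<longleftrightarrow> fo a F \<and> card F = Mx a"
proof
  assume H: "max_out_forest a F"
  then have foF: "fo a F" unfolding max_out_forest_def fo_def using out_forest_iff by blast
  obtain G where G: "fo a G" "card G = Mx a" by (rule Mx_attained)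
  have "out_forest a G" using G(1) out_forest_iff unfolding fo_def by blast
  then have "card G \<le> card F" using H unfolding max_out_forest_def by blast
  then show "fo a F \<and> card F = Mx a" using foF card_le_Mx[OF foF] G(2) by simp
next
  assume H: "fo a F \<and> card F = Mx a"
  have "out_forest a F" using H out_forest_iff unfolding fo_def by blast
  moreover have "card G \<le> card F" if "out_forest a G" for G
  proof -
    have "fo a G" using that out_forest_iff unfolding fo_def by blast
    then show ?thesis using card_le_Mx H by simp
  qed
  ultimately show "max_out_forest a F" unfolding max_out_forest_def by blast
qed

lemma Qf_alt: "Qf a m i j = (\<Sum>F\<in>{F. fo a F \<and> card F = m \<and> rt F i = j}. sg_weight a F)"
proof -
  have "{F. fo a F \<and> card F = m \<and> rt F i = j} = {F \<in> {F. fo a F \<and> card F = m}. rt F i = j}" by blast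
  then have "(\<Sum>F\<in>{F. fo a F \<and> card F = m \<and> rt F i = j}. sg_weight a F)
     = (\<Sum>F\<in>{F. fo a F \<and> card F = m}. if rt F i = j then sg_weight a F else 0)"
    using sum.inter_filter[of "{F. fo a F \<and> card F = m}" "sg_weight a" "\<lambda>F. rt F i = j"] fin_fo[of a]
    by (simp add: finite_subset)
  then show ?thesis unfolding Qf_def by (simp add: if_distrib cong: if_cong)
qed

lemma J_entry:
  "norm_max_out_forest_matrix a $ i $ j = Qf a (Mx a) i j / sig a (Mx a)"
proof -
  have 1: "{F. max_out_forest a F \<and> in_tree_rooted_at F i j} = {F. fo a F \<and> card F = Mx a \<and> rt F i = j}"
  proof -
    have "in_tree_rooted_at F i j \<longleftrightarrow> j = rt F i" if "fo a F" for F
      using in_tree_iff that unfolding fo_def by blast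
    then show ?thesis using max_iff by blast
  qed
  have 2: "{F. max_out_forest a F} = {F. fo a F \<and> card F = Mx a}" using max_iff by blast
  have "norm_max_out_forest_matrix a $ i $ j = (\<Sum>F\<in>{F. max_out_forest a F \<and> in_tree_rooted_at F i j}. sg_weight a F)
            / (\<Sum>F\<in>{F. max_out_forest a F}. sg_weight a F)"
    unfolding norm_max_out_forest_matrix_def by simp
  then show ?thesis unfolding 1 2 Qf_alt sig_def .
qed

lemma weight_pos: "fo a F \<Longrightarrow> sg_weight a F > 0"
  unfolding sg_weight_def fo_def arcs_def by (rule prod_pos) auto

lemma weight_nonneg: "weighted_digraph a \<Longrightarrow> sg_weight a F \<ge> 0"
  unfolding sg_weight_def weighted_digraph_def by (rule prod_nonneg) auto

lemma sig_pos: "weighted_digraph a \<Longrightarrow> sig a (Mx a) > 0"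
proof -
  assume wd: "weighted_digraph a"
  obtain G where G: "fo a G" "card G = Mx a" by (rule Mx_attained)
  show ?thesis unfolding sig_def
  proof (rule sum_pos2)
    show "finite {F. fo a F \<and> card F = Mx a}" using fin_fo by (rule finite_subset[rotated]) blast
    show "G \<in> {F. fo a F \<and> card F = Mx a}" using G by blast
    show "0 < sg_weight a G" using weight_pos G(1) .
    show "\<And>i. i \<in> {F. fo a F \<and> card F = Mx a} \<Longrightarrow> 0 \<le> sg_weight a i" using weight_nonneg wd by blast
  qed
qed

lemma none_above: "{F. fo a F \<and> card F = Suc (Mx a)} = {}"
  using card_le_Mx by fastforce

lemma Q_above: "Qf a (Suc (Mx a)) i j = 0" unfolding Qf_def none_above by simp
lemma sig_above: "sig a (Suc (Mx a)) = 0" unfolding sig_def none_above by simp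

lemma LJ0:
  assumes wd: "weighted_digraph a"
  shows "kirchhoff a ** norm_max_out_forest_matrix a = 0"
proof -
  define s where "s = sig a (Mx a)"
  have "(kirchhoff a ** norm_max_out_forest_matrix a) $ i $ j = 0" for i j
  proof -
    have "(kirchhoff a ** norm_max_out_forest_matrix a) $ i $ j
      = (\<Sum>k\<in>UNIV. a i k * (Qf a (Mx a) i j / s - Qf a (Mx a) k j / s))"
      by (simp add: kirch_mult[OF wd] J_entry s_def)
    also have "\<dots> = (\<Sum>k\<in>UNIV. a i k * (Qf a (Mx a) i j - Qf a (Mx a) k j) / s)"
      by (rule sum.cong[OF refl]) (simp add: diff_divide_distrib right_diff_distrib)
    also have "\<dots> = (\<Sum>k\<in>UNIV. a i k * (Qf a (Mx a) i j - Qf a (Mx a) k j)) / s"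
      by (simp add: sum_divide_distrib)
    also have "(\<Sum>k\<in>UNIV. a i k * (Qf a (Mx a) i j - Qf a (Mx a) k j)) = 0"
      using main_identity[OF wd, of i "Mx a" j] unfolding Q_above sig_above by simp
    finally show ?thesis by simp
  qed
  then show ?thesis by (simp add: vec_eq_iff)
qed

lemma IJ:
  assumes wd: "weighted_digraph a"
  shows "\<exists>X. mat 1 - norm_max_out_forest_matrix a = kirchhoff a ** X"
proof (cases "Mx a")
  case 0
  have fo0: "{F. fo a F \<and> card F = 0} = {{}}" using fo_empty by auto
  have "norm_max_out_forest_matrix a $ i $ j = (if i = j then 1 else 0)" for i j
  proof -
    have f: "forest {}" unfolding forest_def indeg1_def acyclic_def by simp
    have "rt {} i = i" using rt_root[OF f] unfolding isroot_def by blast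
    then show ?thesis unfolding J_entry 0 Qf_def sig_def fo0 by (simp add: sg_weight_def)
  qed
  then have "norm_max_out_forest_matrix a = mat 1" by (simp add: vec_eq_iff mat_def)
  then show ?thesis by (intro exI[of _ 0]) simp
next
  case (Suc m)
  define s where "s = sig a (Mx a)"
  have spos: "s > 0" using sig_pos[OF wd] s_def by simp
  define X where "X = (\<chi> i j. Qf a m i j / s)"
  have "(mat 1 - norm_max_out_forest_matrix a) $ i $ j = (kirchhoff a ** X) $ i $ j" for i j
  proof -
    have "(kirchhoff a ** X) $ i $ j = (\<Sum>k\<in>UNIV. a i k * (Qf a m i j / s - Qf a m k j / s))"
      by (simp add: kirch_mult[OF wd] X_def)
    also have "\<dots> = (\<Sum>k\<in>UNIV. a i k * (Qf a m i j - Qf a m k j) / s)"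
      by (rule sum.cong[OF refl]) (simp add: diff_divide_distrib right_diff_distrib)
    also have "\<dots> = (\<Sum>k\<in>UNIV. a i k * (Qf a m i j - Qf a m k j)) / s"
      by (simp add: sum_divide_distrib)
    also have "(\<Sum>k\<in>UNIV. a i k * (Qf a m i j - Qf a m k j)) = (if i = j then s else 0) - Qf a (Mx a) i j"
    proof -
      have e: "(\<Sum>k\<in>UNIV. a i k * (Qf a m i j - Qf a m k j)) + Qf a (Mx a) i j = (if i = j then s else 0)"
        using main_identity[OF wd, of i m j] unfolding Suc s_def by simp
      then show ?thesis by (simp add: eq_diff_eq)
    qed
    finally have "(kirchhoff a ** X) $ i $ j = ((if i = j then s else 0) - Qf a (Mx a) i j) / s" .
    also have "\<dots> = (if i = j then 1 else 0) - Qf a (Mx a) i j / s" using spos by (simp add: diff_divide_distrib)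
    also have "\<dots> = (mat 1 - norm_max_out_forest_matrix a) $ i $ j" by (simp add: J_entry s_def mat_def)
    finally show ?thesis by simp
  qed
  then show ?thesis by (intro exI[of _ X]) (simp add: vec_eq_iff)
qed

theorem proposition6:
  fixes a :: "'n::finite \<Rightarrow> 'n \<Rightarrow> real"
  assumes "weighted_digraph a"
  shows "is_eigenprojection (norm_max_out_forest_matrix a) (kirchhoff a)
    \<and> mat_index (kirchhoff a) = 1
    \<and> mat_range (norm_max_out_forest_matrix a) = mat_kernel (kirchhoff a)
    \<and> mat_kernel (norm_max_out_forest_matrix a) = mat_range (kirchhoff a)"
proof -
  obtain X where X: "mat 1 - norm_max_out_forest_matrix a = kirchhoff a ** X" using IJ[OF assms] by blast
  define v :: "real^'n" where "v = (\<chi> i. 1)"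
  have v0: "v \<noteq> 0" unfolding v_def by (simp add: vec_eq_iff)
  have Lv: "kirchhoff a *v v = 0" by (simp add: vec_eq_iff kirch_vec[OF assms] v_def)
  show ?thesis
    by (rule abstract[OF _ LJ0[OF assms] X v0 Lv]) (rule NR[OF assms])
qed

end
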